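(* Let $\alpha\in(0,1)$. (i) Let $m\ge 2$ be even and $A=\{a_1,\dots,a_m\}$. Let $\mathcal E$ be the election with two agents whose preferences are $$\sigma_1:\ a_1\succ\!\!\succ a_2\succ\!\!\succ\cdots\succ\!\!\succ a_{m/2+1}\succ a_{m/2+2}\succ\cdots\succ a_m,$$ $$\sigma_2:\ a_{m/2+1}\succ a_{m/2+2}\succ\cdots\succ a_m\succ a_1\succ\cdots\succ a_{m/2}.$$ Then $$\mathsf{dist}_\alpha(a_1,\mathcal E)=\frac{1+2\alpha^{m/2}-\alpha^m}{\alpha^m+1}.$$ (ii) If $m\ge 3$ is odd, there exists an election $\mathcal E'$ with $m$ alternatives, including an alternative $a_1$, such that $$\mathsf{dist}_\alpha(a_1,\mathcal E')=\frac{1+2\alpha^{(m-1)/2}-\alpha^{m-1}}{\alpha^{m-1}+1}.$$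
   Context: A preference $\sigma_i=(\pi_i,\Join_i)$ is a ranking $\pi_i:[m]\to A$ (a bijection, $\pi_i(1)$ most preferred) together with $\Join_i:[m-1]\to\{\succ,\succ\!\!\succ\}$. The displayed chains list $\pi_i(1),\pi_i(2),\dots$ with the symbol $\Join_i(j)$ between positions $j$ and $j+1$. A metric $d$ on agents and alternatives is nonnegative and symmetric, satisfies the triangle inequality, and has $d(x,x)=0$. The profile is $\alpha$-consistent with $d$ (mandatory elicitation) if for all $i$ and $j\in[m-1]$: - $\Join_i(j)=\,\succ$ implies $d(i,\pi_i(j+1))\ge d(i,\pi_i(j))>\alpha d(i,\pi_i(j+1))$; - $\Join_i(j)=\,\succ\!\!\succ$ implies $d(i,\pi_i(j))\le\alpha d(i,\pi_i(j+1))$. $\mathsf{dist}_\alpha(a,\mathcal E)=\sup_d\sum_i d(i,a)/\min_b\sum_i d(i,b)$, with the supremum over general metrics $d$ with which the profile is $\alpha$-consistent. *)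

theory Defs
  imports "HOL-Analysis.Analysis" "HOL-Library.Extended_Real"
begin

text \<open>Points of the metric space: agents (Inl i) and alternatives (Inr a).
  A preference of agent i is a ranking rk i :: nat => 'alt on positions 1..m
  (rk i 1 most preferred) together with J i j (True = strong separator, False = weak)
  for positions j in 1..m-1.\<close>

definition pseudo_metric_on :: "'p set \<Rightarrow> ('p \<Rightarrow> 'p \<Rightarrow> real) \<Rightarrow> bool" where
  "pseudo_metric_on S d \<longleftrightarrow>
     (\<forall>x\<in>S. \<forall>y\<in>S. d x y \<ge> 0 \<and> d x y = d y x) \<and>
     (\<forall>x\<in>S. d x x = 0) \<and>
     (\<forall>x\<in>S. \<forall>y\<in>S. \<forall>z\<in>S. d x z \<le> d x y + d y z)"

definition election :: "'ag set \<Rightarrow> 'alt set \<Rightarrow> nat \<Rightarrow> ('ag \<Rightarrow> nat \<Rightarrow> 'alt) \<Rightarrow> bool" where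
  "election N A m rk \<longleftrightarrow> finite N \<and> N \<noteq> {} \<and> finite A \<and> card A = m \<and>
     (\<forall>i\<in>N. bij_betw (rk i) {1..m} A)"

definition alpha_consistent ::
  "real \<Rightarrow> 'ag set \<Rightarrow> nat \<Rightarrow> ('ag \<Rightarrow> nat \<Rightarrow> 'alt) \<Rightarrow> ('ag \<Rightarrow> nat \<Rightarrow> bool)
     \<Rightarrow> ('ag + 'alt \<Rightarrow> 'ag + 'alt \<Rightarrow> real) \<Rightarrow> bool" where
  "alpha_consistent \<alpha> N m rk J d \<longleftrightarrow>
     (\<forall>i\<in>N. \<forall>j\<in>{1..m-1}.
        (\<not> J i j \<longrightarrow> d (Inl i) (Inr (rk i (j+1))) \<ge> d (Inl i) (Inr (rk i j)) \<and>
                       d (Inl i) (Inr (rk i j)) > \<alpha> * d (Inl i) (Inr (rk i (j+1)))) \<and>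
        (J i j \<longrightarrow> d (Inl i) (Inr (rk i j)) \<le> \<alpha> * d (Inl i) (Inr (rk i (j+1)))))"

definition social_cost :: "'ag set \<Rightarrow> ('ag + 'alt \<Rightarrow> 'ag + 'alt \<Rightarrow> real) \<Rightarrow> 'alt \<Rightarrow> real" where
  "social_cost N d a = (\<Sum>i\<in>N. d (Inl i) (Inr a))"

definition dist_alpha ::
  "real \<Rightarrow> 'ag set \<Rightarrow> 'alt set \<Rightarrow> ('ag \<Rightarrow> nat \<Rightarrow> 'alt) \<Rightarrow> ('ag \<Rightarrow> nat \<Rightarrow> bool) \<Rightarrow> 'alt \<Rightarrow> ereal" where
  "dist_alpha \<alpha> N A rk J a =
     (SUP d \<in> {d. pseudo_metric_on (Inl ` N \<union> Inr ` A) d \<and> alpha_consistent \<alpha> N (card A) rk J d}.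
        ereal (social_cost N d a / Min (social_cost N d ` A)))"

text \<open>The election of part (i): agents 1 and 2, alternatives a_k = k for k in 1..m.\<close>
definition ex_pi :: "nat \<Rightarrow> nat \<Rightarrow> nat \<Rightarrow> nat" where
  "ex_pi m i k = (if i = 1 then k else (if k \<le> m div 2 then k + m div 2 else k - m div 2))"

definition ex_J :: "nat \<Rightarrow> nat \<Rightarrow> nat \<Rightarrow> bool" where
  "ex_J m i j = (i = 1 \<and> j \<le> m div 2)"

end

theory Submission
  imports Defs
begin


lemma chain_mono:
  fixes \<alpha> :: real
  assumes cons: "alpha_consistent \<alpha> N m rk J d" and i: "i \<in> N" and a: "0 < \<alpha>" "\<alpha> < 1"
    and nn: "\<forall>k\<in>{1..m}. 0 \<le> d (Inl i) (Inr (rk i k))"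
    and pq: "p \<le> q" and p1: "1 \<le> p" and qm: "q \<le> m"
  shows "d (Inl i) (Inr (rk i p)) \<le> d (Inl i) (Inr (rk i q))"
  using pq qm
proof (induction q rule: dec_induct)
  case base then show ?case by simp
next
  case (step n)
  have j: "n \<in> {1..m-1}" using step p1 by auto
  have nn1: "0 \<le> d (Inl i) (Inr (rk i (Suc n)))" using nn step by auto
  have "d (Inl i) (Inr (rk i n)) \<le> d (Inl i) (Inr (rk i (n+1)))"
  proof (cases "J i n")
    case True
    then have "d (Inl i) (Inr (rk i n)) \<le> \<alpha> * d (Inl i) (Inr (rk i (n+1)))"
      using cons i j unfolding alpha_consistent_def by blast
    also have "\<dots> \<le> d (Inl i) (Inr (rk i (n+1)))" using nn1 a
      by (simp add: mult_left_le_one_le)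
    finally show ?thesis .
  next
    case False
    then show ?thesis using cons i j unfolding alpha_consistent_def by blast
  qed
  then show ?case using step by simp
qed

lemma chain_strong:
  fixes \<alpha> :: real
  assumes cons: "alpha_consistent \<alpha> N m rk J d" and i: "i \<in> N" and a: "0 < \<alpha>" "\<alpha> < 1"
    and pq: "p \<le> q" and p1: "1 \<le> p" and qm: "q \<le> m"
    and st: "\<forall>j. p \<le> j \<and> j < q \<longrightarrow> J i j"
  shows "d (Inl i) (Inr (rk i p)) \<le> \<alpha> ^ (q - p) * d (Inl i) (Inr (rk i q))"
  using pq qm
proof (induction q rule: dec_induct)
  case base then show ?case by simp
next
  case (step n)
  have j: "n \<in> {1..m-1}" using step p1 by auto
  have "d (Inl i) (Inr (rk i n)) \<le> \<alpha> * d (Inl i) (Inr (rk i (n+1)))"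
    using cons i j st step unfolding alpha_consistent_def by auto
  then have "\<alpha> ^ (n - p) * d (Inl i) (Inr (rk i n)) \<le> \<alpha> ^ (n - p) * (\<alpha> * d (Inl i) (Inr (rk i (n+1))))"
    using a by (simp add: mult_left_mono)
  moreover have "\<alpha> ^ (Suc n - p) = \<alpha> ^ (n - p) * \<alpha>" using step
    by (metis Suc_diff_le power_Suc2)
  ultimately show ?case using step by (simp add: mult.assoc)
qed

lemma chain_weak:
  fixes \<alpha> :: real
  assumes cons: "alpha_consistent \<alpha> N m rk J d" and i: "i \<in> N" and a: "0 < \<alpha>" "\<alpha> < 1"
    and pq: "p \<le> q" and p1: "1 \<le> p" and qm: "q \<le> m"
    and st: "\<forall>j. p \<le> j \<and> j < q \<longrightarrow> \<not> J i j"
  shows "\<alpha> ^ (q - p) * d (Inl i) (Inr (rk i q)) \<le> d (Inl i) (Inr (rk i p))"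
  using pq qm
proof (induction q rule: dec_induct)
  case base then show ?case by simp
next
  case (step n)
  have j: "n \<in> {1..m-1}" using step p1 by auto
  have "\<alpha> * d (Inl i) (Inr (rk i (n+1))) < d (Inl i) (Inr (rk i n))"
    using cons i j st step unfolding alpha_consistent_def by auto
  then have "\<alpha> ^ (n - p) * (\<alpha> * d (Inl i) (Inr (rk i (n+1)))) \<le> \<alpha> ^ (n - p) * d (Inl i) (Inr (rk i n))"
    using a by (simp add: mult_left_mono)
  moreover have "\<alpha> ^ (Suc n - p) = \<alpha> ^ (n - p) * \<alpha>" using step
    by (metis Suc_diff_le power_Suc2)
  ultimately show ?case using step by (simp add: mult.assoc)
qed



lemma lp_ineq:
  fixes t x1 y1 X Y :: real
  assumes t: "0 < t" "t < 1" and nn: "0 \<le> X" "0 \<le> Y" "0 \<le> x1"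
    and h1: "x1 \<le> t * X" and h2: "t * y1 \<le> Y" and h3: "y1 \<le> Y + X + x1"
  shows "x1 + y1 \<le> (1 + 2*t - t^2) / (t^2 + 1) * (X + Y)"
proof -
  have t2: "t^2 \<le> 1" using t by (simp add: power_le_one)
  have "(1 - t^2) * y1 \<le> (1 - t^2) * (Y + X + x1)"
    using h3 t2 by (intro mult_left_mono) auto
  moreover have "2*t*(t*y1) \<le> 2*t*Y" using h2 t by simp
  ultimately have "(1 + t^2) * y1 \<le> (1 - t^2) * (Y + X + x1) + 2*t*Y"
    by (simp add: algebra_simps power2_eq_square)
  then have "(t^2+1) * (x1 + y1) \<le> 2 * x1 + (1 - t^2) * (Y + X) + 2*t*Y"
    by (simp add: algebra_simps power2_eq_square)
  also have "\<dots> \<le> (1 + 2*t - t^2) * (X + Y)" using h1 by (simp add: algebra_simps power2_eq_square)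
  finally have "(t^2+1) * (x1 + y1) \<le> (1 + 2*t - t^2) * (X + Y)" .
  moreover have "0 < t^2 + 1" by (simp add: add_nonneg_pos)
  ultimately show ?thesis by (simp add: field_simps)
qed



lemma upper:
  fixes \<alpha> :: real and h e m :: nat and rk :: "nat \<Rightarrow> nat \<Rightarrow> nat" and J d
  assumes a: "0 < \<alpha>" "\<alpha> < 1" and h: "1 \<le> h" and e: "e \<le> 1" and m: "m = 2*h+e"
    and rk1: "\<forall>k\<in>{1..m}. rk 1 k = k"
    and rk2: "\<forall>k\<in>{1..m}. rk 2 k = (if k \<le> h then k+h else if k \<le> 2*h then k-h else k)"
    and J1: "\<forall>j\<in>{1..m-1}. J 1 j = (j \<le> h \<or> j = 2*h)"
    and J2: "\<forall>j\<in>{1..m-1}. J 2 j = (j = 2*h)"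
    and pm: "pseudo_metric_on (Inl ` {1::nat,2} \<union> Inr ` {1..m}) d"
    and cons: "alpha_consistent \<alpha> {1::nat,2} m rk J d"
  shows "social_cost {1::nat,2} d 1 / Min (social_cost {1,2} d ` {1..m})
           \<le> (1 + 2 * \<alpha> ^ h - \<alpha> ^ (2*h)) / (\<alpha> ^ (2*h) + 1)"
proof -
  define x where "x k = d (Inl 1) (Inr k)" for k
  define y where "y k = d (Inl 2) (Inr k)" for k
  define t where "t = \<alpha> ^ h"
  have t: "0 < t" "t < 1" using a h by (auto simp: t_def power_less_one_iff)
  have t2: "\<alpha> ^ (2*h) = t^2" by (simp add: t_def power_mult[symmetric] mult.commute)
  define V where "V = (1 + 2*t - t^2) / (t^2 + 1)"
  have V: "(1 + 2 * \<alpha> ^ h - \<alpha> ^ (2*h)) / (\<alpha> ^ (2*h) + 1) = V"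
    unfolding V_def t2 t_def by simp
  have V1: "1 \<le> V" unfolding V_def using t
    by (simp add: field_simps power2_eq_square add_nonneg_pos)
  have sc: "social_cost {1::nat,2} d b = x b + y b" for b
    by (simp add: social_cost_def x_def y_def)
  have nnx: "0 \<le> x k" if "k \<in> {1..m}" for k
    using pm that unfolding pseudo_metric_on_def x_def by blast
  have nny: "0 \<le> y k" if "k \<in> {1..m}" for k
    using pm that unfolding pseudo_metric_on_def y_def by blast
  have rk2m: "rk 2 k \<in> {1..m}" if "k \<in> {1..m}" for k
    using rk2 that m by auto
  have nn1: "\<forall>k\<in>{1..m}. 0 \<le> d (Inl 1) (Inr (rk 1 k))" using nnx rk1 unfolding x_def by simp
  have nn2: "\<forall>k\<in>{1..m}. 0 \<le> d (Inl 2) (Inr (rk 2 k))" using nny rk2m unfolding y_def by simp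
  have monoX: "x p \<le> x q" if "1 \<le> p" "p \<le> q" "q \<le> m" for p q
    using chain_mono[OF cons _ a nn1 that(2,1,3)] rk1 that unfolding x_def by simp
  have monoY: "y (rk 2 p) \<le> y (rk 2 q)" if "1 \<le> p" "p \<le> q" "q \<le> m" for p q
    using chain_mono[OF cons _ a nn2 that(2,1,3)] that unfolding y_def by simp
  have A: "x 1 \<le> t * x (h+1)"
  proof -
    have "\<forall>j. 1 \<le> j \<and> j < h+1 \<longrightarrow> J 1 j" using J1 m h by auto
    from chain_strong[OF cons _ a _ _ _ this] h m rk1 show ?thesis
      unfolding x_def t_def by simp
  qed
  have B: "t * y 1 \<le> y (h+1)"
  proof -
    have "\<forall>j. 1 \<le> j \<and> j < h+1 \<longrightarrow> \<not> J 2 j" using J2 m h by auto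
    from chain_weak[OF cons _ a _ _ _ this] h m rk2 show ?thesis
      unfolding y_def t_def by simp
  qed
  have C: "y 1 \<le> y (h+1) + x (h+1) + x 1"
  proof -
    have m1: "Inl 1 \<in> Inl ` {1::nat,2} \<union> Inr ` {1..m}" "Inl 2 \<in> Inl ` {1::nat,2} \<union> Inr ` {1..m}"
      "Inr 1 \<in> Inl ` {1::nat,2} \<union> Inr ` {1..m}" "Inr (h+1) \<in> Inl ` {1::nat,2} \<union> Inr ` {1..m}"
      using h m by auto
    have "d (Inl 2) (Inr 1) \<le> d (Inl 2) (Inr (h+1)) + d (Inr (h+1)) (Inr 1)"
      using pm m1 unfolding pseudo_metric_on_def by blast
    moreover have "d (Inr (h+1)) (Inr 1) \<le> d (Inr (h+1)) (Inl 1) + d (Inl 1) (Inr 1)"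
      using pm m1 unfolding pseudo_metric_on_def by blast
    moreover have "d (Inr (h+1)) (Inl 1) = d (Inl 1) (Inr (h+1))"
      using pm m1 unfolding pseudo_metric_on_def by metis
    ultimately show ?thesis unfolding x_def y_def by linarith
  qed
  have E: "x 1 + y 1 \<le> V * (x (h+1) + y (h+1))"
    unfolding V_def
    by (rule lp_ineq[OF t nnx nny nnx A B]) (use C h m in auto)
  have D: "x 1 + y 1 \<le> V * (x b + y b)" if b: "b \<in> {1..m}" for b
  proof -
    consider "b \<le> h" | "h+1 \<le> b" "b \<le> 2*h" | "b = 2*h+1" using b m e by force
    then show ?thesis
    proof cases
      case 1
      have "x 1 \<le> x b" using monoX[of 1 b] 1 b by auto
      moreover have "y 1 \<le> y b" using monoY[of "h+1" "b+h"] 1 b rk2 m by auto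
      ultimately have "x 1 + y 1 \<le> x b + y b" by simp
      also have "\<dots> \<le> V * (x b + y b)" using V1 nnx[OF b] nny[OF b]
        by (simp add: mult_le_cancel_right1)
      finally show ?thesis .
    next
      case 2
      have "x (h+1) \<le> x b" using monoX[of "h+1" b] 2 b by auto
      moreover have "y (h+1) \<le> y b"
      proof -
        have r1: "rk 2 1 = h+1" using rk2 m h by auto
        have "b-h \<in> {1..m}" "b - h \<le> h" using m h 2 by auto
        then have r2: "rk 2 (b-h) = b" using rk2 2 by auto
        have "y (rk 2 1) \<le> y (rk 2 (b-h))" using monoY[of 1 "b-h"] 2 m h by auto
        then show ?thesis using r1 r2 by simp
      qed
      ultimately have "V * (x (h+1) + y (h+1)) \<le> V * (x b + y b)" using V1 by simp
      then show ?thesis using E by linarith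
    next
      case 3
      have "x 1 \<le> x b" using monoX[of 1 b] 3 b by auto
      moreover have "y 1 \<le> y b" using monoY[of "h+1" b] 3 b rk2 m h by auto
      ultimately have "x 1 + y 1 \<le> x b + y b" by simp
      also have "\<dots> \<le> V * (x b + y b)" using V1 nnx[OF b] nny[OF b]
        by (simp add: mult_le_cancel_right1)
      finally show ?thesis .
    qed
  qed
  have fin: "finite (social_cost {1::nat,2} d ` {1..m})" "social_cost {1::nat,2} d ` {1..m} \<noteq> {}"
    using h m by auto
  obtain b where b: "b \<in> {1..m}" "Min (social_cost {1::nat,2} d ` {1..m}) = x b + y b"
    using Min_in[OF fin] sc by auto
  have "(x 1 + y 1) / (x b + y b) \<le> V"
  proof (cases "x b + y b = 0")
    case True then show ?thesis using V1 by simp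
  next
    case False
    then have "0 < x b + y b" using nnx[OF b(1)] nny[OF b(1)] by simp
    then show ?thesis using D[OF b(1)] by (simp add: divide_le_eq)
  qed
  then show ?thesis using b sc V by simp
qed



definition cX :: "real \<Rightarrow> nat \<Rightarrow> real \<Rightarrow> real" where
  "cX \<alpha> h s = (1 / s^h - 1) / (1 + \<alpha>^h)"
definition cL :: "real \<Rightarrow> nat \<Rightarrow> real \<Rightarrow> real" where
  "cL \<alpha> h s = (cX \<alpha> h s + 1 / s^h + 1) / \<alpha>"
definition xc :: "real \<Rightarrow> nat \<Rightarrow> real \<Rightarrow> nat \<Rightarrow> real" where
  "xc \<alpha> h s k = (if k \<le> h+1 then \<alpha>^(h+1-k) * cX \<alpha> h s else if k \<le> 2*h then cX \<alpha> h s else cL \<alpha> h s)"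
definition yc :: "real \<Rightarrow> nat \<Rightarrow> real \<Rightarrow> nat \<Rightarrow> real" where
  "yc \<alpha> h s k = (if k \<le> h then 1 / s^h else if k \<le> 2*h then 1 / s^(k-h-1) else cL \<alpha> h s)"
definition co :: "real \<Rightarrow> nat \<Rightarrow> real \<Rightarrow> nat + nat \<Rightarrow> real \<times> real" where
  "co \<alpha> h s p = (case p of Inl i \<Rightarrow> (if i = 1 then (0, cX \<alpha> h s + 1) else (cX \<alpha> h s + 1, 0))
                       | Inr k \<Rightarrow> (xc \<alpha> h s k, yc \<alpha> h s k))"
definition dd :: "real \<Rightarrow> nat \<Rightarrow> real \<Rightarrow> nat + nat \<Rightarrow> nat + nat \<Rightarrow> real" where
  "dd \<alpha> h s p q = max \<bar>fst (co \<alpha> h s p) - fst (co \<alpha> h s q)\<bar> \<bar>snd (co \<alpha> h s p) - snd (co \<alpha> h s q)\<bar>"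

lemma dd_pm: "pseudo_metric_on S (dd \<alpha> h s)"
  unfolding pseudo_metric_on_def dd_def
  by (auto simp: abs_minus_commute)

lemma lower:
  fixes \<alpha> s :: real and h e m :: nat and rk :: "nat \<Rightarrow> nat \<Rightarrow> nat" and J
  assumes a: "0 < \<alpha>" "\<alpha> < 1" and s: "\<alpha> < s" "s < 1" and h: "1 \<le> h" and e: "e \<le> 1" and m: "m = 2*h+e"
    and rk1: "\<forall>k\<in>{1..m}. rk 1 k = k"
    and rk2: "\<forall>k\<in>{1..m}. rk 2 k = (if k \<le> h then k+h else if k \<le> 2*h then k-h else k)"
    and J1: "\<forall>j\<in>{1..m-1}. J 1 j = (j \<le> h \<or> j = 2*h)"
    and J2: "\<forall>j\<in>{1..m-1}. J 2 j = (j = 2*h)"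
  shows "alpha_consistent \<alpha> {1::nat,2} m rk J (dd \<alpha> h s)"
    "social_cost {1::nat,2} (dd \<alpha> h s) 1 / Min (social_cost {1,2} (dd \<alpha> h s) ` {1..m})
      = (\<alpha>^h * cX \<alpha> h s + 1 / s^h) / (cX \<alpha> h s + 1)"
proof -
  define t where "t = \<alpha>^h"
  define u where "u = 1 / s^h"
  define X where "X = cX \<alpha> h s"
  define L where "L = cL \<alpha> h s"
  have t: "0 < t" "t < 1" using a h by (auto simp: t_def power_less_one_iff)
  have sp: "0 < s" using a s by simp
  have st: "t < s^h" unfolding t_def using a s h by (simp add: power_strict_mono)
  have u1: "1 < u" unfolding u_def using sp s h by (simp add: power_less_one_iff)
  have t1: "1 + t \<noteq> 0" using t by simp
  have "X = (u - 1) / (1 + t)" unfolding X_def cX_def u_def t_def by simp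
  then have uX: "u = X * (1 + t) + 1" using t1 by simp
  have uX': "u = X + t * X + 1" using uX by (simp add: algebra_simps)
  have "0 < X * (1 + t)" using uX u1 by linarith
  then have X0: "0 < X" using t by (simp add: zero_less_mult_iff)
  have LX: "L = (X + u + 1) / \<alpha>" unfolding L_def cL_def X_def u_def by simp
  have "(X + u + 1) * \<alpha> \<le> X + u + 1" using a X0 u1 by (intro mult_left_le) auto
  then have L1: "X + u + 1 \<le> L" unfolding LX using a by (simp add: le_divide_eq)
  have aL: "\<alpha> * L = X + u + 1" unfolding LX using a by simp
  have xc1: "xc \<alpha> h s k = \<alpha>^(h+1-k) * X" if "k \<le> h+1" for k
    using that unfolding xc_def X_def by simp
  have xc2: "xc \<alpha> h s k = X" if "h+1 \<le> k" "k \<le> 2*h" for k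
    using that h unfolding xc_def X_def by auto
  have xc3: "xc \<alpha> h s (2*h+1) = L" using h unfolding xc_def L_def by auto
  have yc1: "yc \<alpha> h s k = u" if "k \<le> h" for k
    using that unfolding yc_def u_def by simp
  have yc2: "yc \<alpha> h s k = 1 / s^(k-h-1)" if "h+1 \<le> k" "k \<le> 2*h" for k
    using that h unfolding yc_def by auto
  have yc3: "yc \<alpha> h s (2*h+1) = L" using h unfolding yc_def L_def by auto
  have spow: "1 \<le> 1 / s^j" "1 / s^j \<le> u" if "j \<le> h" for j
  proof -
    have "s^h \<le> s^j" using that sp s by (simp add: power_decreasing)
    moreover have "s^j \<le> 1" using sp s by (simp add: power_le_one)
    moreover have "0 < s^h" "0 < s^j" using sp by auto
    ultimately show "1 \<le> 1 / s^j" "1 / s^j \<le> u" unfolding u_def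
      by (simp_all add: le_divide_eq divide_left_mono)
  qed
  have key: "0 \<le> xc \<alpha> h s k \<and> 0 \<le> yc \<alpha> h s k \<and> \<bar>xc \<alpha> h s k - yc \<alpha> h s k\<bar> \<le> X + 1
      \<and> X + 1 \<le> xc \<alpha> h s k + yc \<alpha> h s k" if k: "k \<in> {1..m}" for k
  proof -
    consider "k \<le> h" | "h+1 \<le> k" "k \<le> 2*h" | "k = 2*h+1" using k m e by force
    then show ?thesis
    proof cases
      case 1
      have "\<alpha>^(h+1-k) \<le> 1" using a by (simp add: power_le_one)
      moreover have "t \<le> \<alpha>^(h+1-k)" unfolding t_def using a 1 k
        by (intro power_decreasing) auto
      ultimately have A1: "t * X \<le> \<alpha>^(h+1-k) * X" and A2: "\<alpha>^(h+1-k) * X \<le> X"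
        using X0 by (auto simp: mult_right_mono mult_left_le_one_le)
      have tX: "0 \<le> t * X" using t X0 by simp
      have xk: "xc \<alpha> h s k = \<alpha>^(h+1-k) * X" using xc1[of k] 1 by simp
      have yk: "yc \<alpha> h s k = u" using yc1[OF 1] .
      show ?thesis unfolding xk yk abs_le_iff using A1 A2 tX uX' X0 t u1
        by linarith
    next
      case 2
      have "1 \<le> yc \<alpha> h s k" "yc \<alpha> h s k \<le> u" using yc2[OF 2] spow[of "k-h-1"] 2 by auto
      moreover have "t * X \<le> X" using t X0 by simp
      moreover have "0 \<le> t * X" using t X0 by simp
      ultimately show ?thesis unfolding xc2[OF 2] abs_le_iff using X0 uX'
        by linarith
    next
      case 3
      then show ?thesis unfolding 3 xc3 yc3 using L1 X0 u1 by simp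
    qed
  qed
  have dx: "dd \<alpha> h s (Inl 1) (Inr k) = xc \<alpha> h s k" if "k \<in> {1..m}" for k
    using key[OF that] unfolding dd_def co_def X_def by (auto simp: abs_le_iff max_def)
  have dy: "dd \<alpha> h s (Inl 2) (Inr k) = yc \<alpha> h s k" if "k \<in> {1..m}" for k
    using key[OF that] unfolding dd_def co_def X_def by (auto simp: abs_le_iff max_def)
  have sc: "social_cost {1::nat,2} (dd \<alpha> h s) k = xc \<alpha> h s k + yc \<alpha> h s k" if "k \<in> {1..m}" for k
    using dx[OF that] dy[OF that] by (simp add: social_cost_def)
  have rk2m: "rk 2 k \<in> {1..m}" if "k \<in> {1..m}" for k
    using rk2 that m by auto
  have pw: "1 / s^(j-1) \<le> 1 / s^j \<and> \<alpha> * (1 / s^j) < 1 / s^(j-1)" if "1 \<le> j" for j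
  proof -
    have sj: "s^j = s * s^(j-1)" using that by (metis Suc_diff_le diff_Suc_1 power_Suc)
    have p: "0 < s^(j-1)" using sp by simp
    have "s^j \<le> s^(j-1)" unfolding sj using s p by (simp add: mult_left_le_one_le)
    moreover have "\<alpha> * s^(j-1) < s^j" unfolding sj using s p by simp
    ultimately show ?thesis using p sj sp
      by (simp add: divide_left_mono divide_simps)
  qed
  show "alpha_consistent \<alpha> {1::nat,2} m rk J (dd \<alpha> h s)"
    unfolding alpha_consistent_def
  proof (intro ballI)
    fix i j assume i: "i \<in> {1::nat,2}" and j: "j \<in> {1..m-1}"
    have jm: "j \<in> {1..m}" "j+1 \<in> {1..m}" using j m h by auto
    show "(\<not> J i j \<longrightarrow> dd \<alpha> h s (Inl i) (Inr (rk i (j+1))) \<ge> dd \<alpha> h s (Inl i) (Inr (rk i j)) \<and>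
                       dd \<alpha> h s (Inl i) (Inr (rk i j)) > \<alpha> * dd \<alpha> h s (Inl i) (Inr (rk i (j+1)))) \<and>
        (J i j \<longrightarrow> dd \<alpha> h s (Inl i) (Inr (rk i j)) \<le> \<alpha> * dd \<alpha> h s (Inl i) (Inr (rk i (j+1))))"
    proof (cases "i = 1")
      case True
      have r: "rk i j = j" "rk i (j+1) = j+1" using rk1 jm True by auto
      have d: "dd \<alpha> h s (Inl i) (Inr (rk i j)) = xc \<alpha> h s j"
        "dd \<alpha> h s (Inl i) (Inr (rk i (j+1))) = xc \<alpha> h s (j+1)"
        unfolding r using dx jm True by auto
      consider "j \<le> h" | "h+1 \<le> j" "j < 2*h" | "j = 2*h" using j m e by force
      then show ?thesis
      proof cases
        case 1
        have "J i j" using J1 j 1 True by auto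
        moreover have "\<alpha>^(h+1-j) = \<alpha> * \<alpha>^(h+1-(j+1))" using 1
          by (metis Suc_diff_le Suc_eq_plus1 diff_Suc_Suc power_Suc)
        ultimately show ?thesis unfolding d using xc1[of j] xc1[of "j+1"] 1 by simp
      next
        case 2
        have "\<not> J i j" using J1 j 2 True by auto
        then show ?thesis unfolding d using xc2[of j] xc2[of "j+1"] 2 X0 a by simp
      next
        case 3
        have "J i j" using J1 j 3 True by auto
        then show ?thesis unfolding d using xc2[of j] xc3 3 h aL X0 u1 by simp
      qed
    next
      case False
      then have i2: "i = 2" using i by auto
      have d: "dd \<alpha> h s (Inl i) (Inr (rk i j)) = yc \<alpha> h s (rk 2 j)"
        "dd \<alpha> h s (Inl i) (Inr (rk i (j+1))) = yc \<alpha> h s (rk 2 (j+1))"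
        using dy rk2m i2 jm by auto
      consider "j \<le> h" | "h+1 \<le> j" "j < 2*h" | "j = 2*h" using j m e by force
      then show ?thesis
      proof cases
        case 1
        have nJ: "\<not> J i j" using J2 j 1 i2 h by auto
        have y1: "yc \<alpha> h s (rk 2 j) = 1 / s^(j-1)"
        proof -
          have "rk 2 j = (if j < h then j + h else 2*h)" using rk2 jm 1 by auto
          then show ?thesis using yc2 1 jm h by auto
        qed
        have y2: "yc \<alpha> h s (rk 2 (j+1)) = 1 / s^j"
        proof (cases "j < h")
          case True
          then have "rk 2 (j+1) = j+1+h" using rk2 jm by auto
          then show ?thesis using yc2[of "j+1+h"] True by auto
        next
          case False
          then have "rk 2 (j+1) = 1" using rk2 jm 1 by auto
          then show ?thesis using yc1[of 1] h False 1 unfolding u_def by auto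
        qed
        show ?thesis using nJ unfolding d y1 y2 using pw[of j] jm by simp
      next
        case 2
        have nJ: "\<not> J i j" using J2 j 2 i2 by auto
        have "rk 2 j = j - h" "rk 2 (j+1) = j+1-h" using rk2 jm 2 by auto
        then have "yc \<alpha> h s (rk 2 j) = u" "yc \<alpha> h s (rk 2 (j+1)) = u" using yc1 2 by auto
        then show ?thesis using nJ unfolding d using u1 a by simp
      next
        case 3
        have yJ: "J i j" using J2 j 3 i2 by auto
        have "rk 2 j = h" "rk 2 (j+1) = 2*h+1" using rk2 jm 3 h by auto
        then have "yc \<alpha> h s (rk 2 j) = u" "yc \<alpha> h s (rk 2 (j+1)) = L" using yc1 yc3 by auto
        then show ?thesis using yJ unfolding d using aL X0 by simp
      qed
    qed
  qed
  have "Min (social_cost {1,2} (dd \<alpha> h s) ` {1..m}) = X + 1"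
  proof (rule Min_eqI)
    show "finite (social_cost {1::nat,2} (dd \<alpha> h s) ` {1..m})" by simp
    show "\<And>y. y \<in> social_cost {1::nat,2} (dd \<alpha> h s) ` {1..m} \<Longrightarrow> X + 1 \<le> y"
      using key sc by auto
    have "h+1 \<in> {1..m}" using h m by auto
    moreover have "social_cost {1::nat,2} (dd \<alpha> h s) (h+1) = X + 1"
      using sc[OF \<open>h+1 \<in> {1..m}\<close>] xc2[of "h+1"] yc2[of "h+1"] h by simp
    ultimately show "X + 1 \<in> social_cost {1::nat,2} (dd \<alpha> h s) ` {1..m}"
      by (metis image_eqI)
  qed
  moreover have "social_cost {1::nat,2} (dd \<alpha> h s) 1 = \<alpha>^h * X + u"
    using sc[of 1] xc1[of 1] yc1[of 1] h m by simp
  ultimately show "social_cost {1::nat,2} (dd \<alpha> h s) 1 / Min (social_cost {1,2} (dd \<alpha> h s) ` {1..m})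
      = (\<alpha>^h * cX \<alpha> h s + 1 / s^h) / (cX \<alpha> h s + 1)"
    unfolding X_def u_def by simp
qed



lemma N: fixes t :: real assumes "0<t" shows "t * ((1/t - 1) / (1 + t)) + 1/t = (1 + 2*t - t^2) / (t * (1 + t))"
proof -
  have tt: "0 < t*t" using assms by simp
  have p3: "t + t*t \<noteq> 0" using assms tt by linarith
  have p: "t \<noteq> 0" "1 + t \<noteq> 0" "t + t*t \<noteq> 0" using assms p3 by auto
  have a: "t * ((1/t - 1) / (1 + t)) * (t * (1 + t)) = t - t*t" using p
    by (simp add: field_simps)
  have b: "1/t * (t * (1 + t)) = 1 + t" using p by simp
  have "(t * ((1/t - 1) / (1 + t)) + 1/t) * (t * (1 + t)) = 1 + 2*t - t^2"
    unfolding distrib_right a b by (simp add: power2_eq_square)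
  then show ?thesis using p by (simp add: eq_divide_eq)
qed
lemma Dn: fixes t :: real assumes "0<t" shows "(1/t - 1) / (1 + t) + 1 = (1 + t^2) / (t * (1 + t))"
proof -
  have tt: "0 < t*t" using assms by simp
  have p3: "t + t*t \<noteq> 0" using assms tt by linarith
  have p: "t \<noteq> 0" "1 + t \<noteq> 0" "t + t*t \<noteq> 0" using assms p3 by auto
  show ?thesis using p by (simp add: field_simps power2_eq_square)
qed

lemma F_lim:
  fixes \<alpha> :: real and h :: nat
  assumes a: "0 < \<alpha>" "\<alpha> < 1" and h: "1 \<le> h"
  shows "((\<lambda>s. (\<alpha>^h * cX \<alpha> h s + 1 / s^h) / (cX \<alpha> h s + 1)) \<longlongrightarrow>
           (1 + 2 * \<alpha> ^ h - \<alpha> ^ (2*h)) / (\<alpha> ^ (2*h) + 1)) (at_right \<alpha>)"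
proof -
  define t where "t = \<alpha>^h"
  have t: "0 < t" "t < 1" using a h by (auto simp: t_def power_less_one_iff)
  have t2: "\<alpha> ^ (2*h) = t^2" by (simp add: t_def power_mult[symmetric] mult.commute)
  have "0 < \<alpha>^h" using a by simp
  then have ne: "1 + \<alpha>^h \<noteq> 0" by linarith
  have cXa: "cX \<alpha> h \<alpha> = (1/t - 1) / (1 + t)" unfolding cX_def t_def ..
  have den: "cX \<alpha> h \<alpha> + 1 \<noteq> 0"
  proof -
    have "0 \<le> cX \<alpha> h \<alpha>" unfolding cXa using t by (simp add: field_simps)
    then show ?thesis by simp
  qed
  have "((\<lambda>s. (\<alpha>^h * cX \<alpha> h s + 1 / s^h) / (cX \<alpha> h s + 1)) \<longlongrightarrow>
           (\<alpha>^h * cX \<alpha> h \<alpha> + 1 / \<alpha>^h) / (cX \<alpha> h \<alpha> + 1)) (at_right \<alpha>)"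
    using a den ne unfolding cX_def
    by (intro tendsto_intros) auto
  moreover have "(\<alpha>^h * cX \<alpha> h \<alpha> + 1 / \<alpha>^h) / (cX \<alpha> h \<alpha> + 1)
      = (1 + 2 * \<alpha> ^ h - \<alpha> ^ (2*h)) / (\<alpha> ^ (2*h) + 1)"
  proof -
    have p: "t * (1 + t) \<noteq> 0" "1 + t \<noteq> 0" "t \<noteq> 0" using t by auto
    note N = N[OF t(1)] and Dn = Dn[OF t(1)]
    have "0 \<le> t^2" by simp
    then have q: "1 + t^2 \<noteq> 0" by linarith
    show ?thesis unfolding cXa t2 t_def[symmetric] N Dn using p q
      by (simp add: add.commute)
  qed
  ultimately show ?thesis by simp
qed



lemma generic:
  fixes \<alpha> :: real and h e m :: nat and rk :: "nat \<Rightarrow> nat \<Rightarrow> nat" and J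
  assumes a: "0 < \<alpha>" "\<alpha> < 1" and h: "1 \<le> h" and e: "e \<le> 1" and m: "m = 2*h+e"
    and rk1: "\<forall>k\<in>{1..m}. rk 1 k = k"
    and rk2: "\<forall>k\<in>{1..m}. rk 2 k = (if k \<le> h then k+h else if k \<le> 2*h then k-h else k)"
    and J1: "\<forall>j\<in>{1..m-1}. J 1 j = (j \<le> h \<or> j = 2*h)"
    and J2: "\<forall>j\<in>{1..m-1}. J 2 j = (j = 2*h)"
  shows "dist_alpha \<alpha> {1::nat,2} {1..m} rk J 1 = ereal ((1 + 2 * \<alpha> ^ h - \<alpha> ^ (2*h)) / (\<alpha> ^ (2*h) + 1))"
proof -
  define V where "V = (1 + 2 * \<alpha> ^ h - \<alpha> ^ (2*h)) / (\<alpha> ^ (2*h) + 1)"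
  define S where "S = {d. pseudo_metric_on (Inl ` {1::nat,2} \<union> Inr ` {1..m}) d \<and>
      alpha_consistent \<alpha> {1::nat,2} (card {1..m}) rk J d}"
  define g where "g d = social_cost {1::nat,2} d 1 / Min (social_cost {1::nat,2} d ` {1..m})" for d
  define F where "F s = (\<alpha>^h * cX \<alpha> h s + 1 / s^h) / (cX \<alpha> h s + 1)" for s
  have dist: "dist_alpha \<alpha> {1::nat,2} {1..m} rk J 1 = (SUP d\<in>S. ereal (g d))"
    unfolding dist_alpha_def S_def g_def ..
  have mem: "dd \<alpha> h s \<in> S \<and> g (dd \<alpha> h s) = F s" if "\<alpha> < s" "s < 1" for s
    using lower[OF a that h e m rk1 rk2 J1 J2] dd_pm unfolding S_def g_def F_def by simp
  have lim: "(F \<longlongrightarrow> V) (at_right \<alpha>)" using F_lim[OF a h] unfolding F_def V_def .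
  have "(SUP d\<in>S. ereal (g d)) = ereal V"
  proof (rule antisym)
    show "(SUP d\<in>S. ereal (g d)) \<le> ereal V"
    proof (rule SUP_least)
      fix d assume "d \<in> S"
      then show "ereal (g d) \<le> ereal V"
        using upper[OF a h e m rk1 rk2 J1 J2] unfolding S_def g_def V_def by simp
    qed
    show "ereal V \<le> (SUP d\<in>S. ereal (g d))"
      unfolding le_SUP_iff
    proof (intro allI impI)
      fix y assume y: "y < ereal V"
      show "\<exists>d\<in>S. y < ereal (g d)"
      proof (cases y)
        case (real r)
        then have r: "r < V" using y by simp
        have "eventually (\<lambda>s. r < F s) (at_right \<alpha>)" using order_tendstoD(1)[OF lim r] .
        moreover have "eventually (\<lambda>s. \<alpha> < s) (at_right \<alpha>)" by (rule eventually_at_right_less)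
        moreover have "eventually (\<lambda>s. s < 1) (at_right \<alpha>)"
          using order_tendstoD(2)[OF tendsto_ident_at a(2)] .
        ultimately have "eventually (\<lambda>s. r < F s \<and> \<alpha> < s \<and> s < 1) (at_right \<alpha>)"
          by eventually_elim auto
        then obtain s where s: "r < F s" "\<alpha> < s" "s < 1"
          using eventually_happens[of _ "at_right \<alpha>"] by auto
        then show ?thesis using mem[OF s(2,3)] real by force
      next
        case PInf then show ?thesis using y by simp
      next
        case MInf
        have "\<alpha> < (\<alpha>+1)/2" "(\<alpha>+1)/2 < 1" using a by auto
        then have "dd \<alpha> h ((\<alpha>+1)/2) \<in> S" using mem by blast
        then show ?thesis using MInf by auto
      qed
    qed
  qed
  then show ?thesis using dist V_def by simp
qed



theorem lemma7:
  fixes \<alpha> :: real and m :: nat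
  assumes "0 < \<alpha>" and "\<alpha> < 1"
  shows "(even m \<and> 2 \<le> m \<longrightarrow>
            dist_alpha \<alpha> {1::nat, 2} {1..m} (ex_pi m) (ex_J m) (1::nat)
              = ereal ((1 + 2 * \<alpha> ^ (m div 2) - \<alpha> ^ m) / (\<alpha> ^ m + 1))) \<and>
         (odd m \<and> 3 \<le> m \<longrightarrow>
            (\<exists>(N::nat set) (A::nat set) rk J a1. election N A m rk \<and> a1 \<in> A \<and>
               dist_alpha \<alpha> N A rk J a1
                 = ereal ((1 + 2 * \<alpha> ^ ((m - 1) div 2) - \<alpha> ^ (m - 1)) / (\<alpha> ^ (m - 1) + 1))))"
proof (intro conjI impI)
  assume mm: "even m \<and> 2 \<le> m"
  define h where "h = m div 2"
  have m: "m = 2*h+0" and h: "1 \<le> h" using mm unfolding h_def by auto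
  have "dist_alpha \<alpha> {1::nat, 2} {1..m} (ex_pi m) (ex_J m) (1::nat)
      = ereal ((1 + 2 * \<alpha> ^ h - \<alpha> ^ (2*h)) / (\<alpha> ^ (2*h) + 1))"
  proof (rule generic[OF assms h _ m])
    show "\<forall>k\<in>{1..m}. ex_pi m 1 k = k" by (simp add: ex_pi_def)
    show "\<forall>k\<in>{1..m}. ex_pi m 2 k = (if k \<le> h then k+h else if k \<le> 2*h then k-h else k)"
      using m by (auto simp: ex_pi_def h_def)
    show "\<forall>j\<in>{1..m-1}. ex_J m 1 j = (j \<le> h \<or> j = 2*h)"
      using m by (auto simp: ex_J_def h_def)
    show "\<forall>j\<in>{1..m-1}. ex_J m 2 j = (j = 2*h)"
      using m by (auto simp: ex_J_def)
  qed simp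
  then show "dist_alpha \<alpha> {1::nat, 2} {1..m} (ex_pi m) (ex_J m) (1::nat)
              = ereal ((1 + 2 * \<alpha> ^ (m div 2) - \<alpha> ^ m) / (\<alpha> ^ m + 1))"
    using m unfolding h_def[symmetric] by simp
next
  assume mm: "odd m \<and> 3 \<le> m"
  define h where "h = (m - 1) div 2"
  have m: "m = 2*h+1" and h: "1 \<le> h" using mm unfolding h_def by (auto elim!: oddE)
  define rk :: "nat \<Rightarrow> nat \<Rightarrow> nat" where
    "rk i k = (if i = 1 then k else if k \<le> h then k+h else if k \<le> 2*h then k-h else k)" for i k
  define J :: "nat \<Rightarrow> nat \<Rightarrow> bool" where
    "J i j = (if i = 1 then j \<le> h \<or> j = 2*h else j = 2*h)" for i j
  have gen: "dist_alpha \<alpha> {1::nat, 2} {1..m} rk J (1::nat)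
      = ereal ((1 + 2 * \<alpha> ^ h - \<alpha> ^ (2*h)) / (\<alpha> ^ (2*h) + 1))"
    by (rule generic[OF assms h _ m]) (auto simp: rk_def J_def)
  have el: "election {1::nat,2} {1..m} m rk"
    unfolding election_def
  proof (intro conjI ballI)
    fix i assume i: "i \<in> {1::nat,2}"
    have sub: "rk i ` {1..m} \<subseteq> {1..m}" using m by (auto simp: rk_def)
    have inj: "inj_on (rk i) {1..m}" unfolding inj_on_def rk_def by (auto split: if_split_asm)
    show "bij_betw (rk i) {1..m} {1..m}"
      using endo_inj_surj[OF _ sub inj] inj by (simp add: bij_betw_def)
  qed auto
  have mh: "m - 1 = 2*h" "(m - 1) div 2 = h" using m by simp_all
  show "\<exists>(N::nat set) (A::nat set) rk J a1. election N A m rk \<and> a1 \<in> A \<and>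
               dist_alpha \<alpha> N A rk J a1
                 = ereal ((1 + 2 * \<alpha> ^ ((m - 1) div 2) - \<alpha> ^ (m - 1)) / (\<alpha> ^ (m - 1) + 1))"
  proof -
    have "(1::nat) \<in> {1..m}" using m by simp
    then show ?thesis unfolding mh(2) unfolding mh(1) using el gen by blast
  qed
qed

end
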